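(* Let $a,b\ge1$ be integers. Let $\mathcal{C}$ be a chain with spine $P=v_0,\dots,v_m$ and arc partition $A(P)=A_1\cup A_2$, and suppose $|A_2|\ge a(b+1)-1$. Then $\mathcal{C}$ contains a strong $(a,b)$-alternating-path $R$ with $s_1(R)=v_0$ and $t_a(R)=v_m$.
   Context: Fix $b\ge1$ and $g:=4b^2$. Gadgets have designated vertices $p,q$ with arc $(p,q)$. Type I: a directed cycle of length at least $g$ through $(p,q)$. Basic type II: vertices $p,q,r$ and a directed path $P_1$ from $r$ to $p$ of length at least $2b^2+b-2$, $q\notin V(P_1)$, every vertex of $P_1$ having an arc to $q$. Type III: vertices $p,q,r$, the arc $(p,q)$, and two internally vertex-disjoint directed paths $P_1,P_2$ from $p$ and from $q$ respectively to $r$, each of length at least $2b-1$. A trivial gadget consists only of $p,q$ and the arc $(p,q)$. A chain $\mathcal{C}$ consists of a directed path $P=v_0,\dots,v_m$ (the spine), a partition $A_1\cup A_2$ of its arc set, and non-trivial gadgets $(G_e)_{e\in A_2}$ such that: each $G_e$ is of type I, type III, or basic type II; for $e=(v_i,v_{i+1})\in A_2$, $p(G_e)=v_i$, $q(G_e)=v_{i+1}$ and $V(G_e)\cap\{v_0,\dots,v_m\}=\{v_i,v_{i+1}\}$; and $V(G_e)\cap V(G_f)\subseteq\{v_0,\dots,v_m\}$ for distinct $e,f\in A_2$. The chain is identified with the digraph $P\cup\bigcup_{e\in A_2}G_e$. An $(a,b)$-alternating-path is an oriented path $R$ consisting of vertices $s_1,\dots,s_a,t_1,\dots,t_a$ and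 pairwise internally vertex-disjoint directed paths $Q_1,\dots,Q_a,Q'_1,\dots,Q'_{a-1}$, $Q_i$ from $s_i$ to $t_i$, $Q'_i$ from $s_{i+1}$ to $t_i$, with $Q_2,\dots,Q_{a-1},Q'_1,\dots,Q'_{a-1}$ of length at least $b$; it is strong if also $Q_1$ and $Q_a$ have length at least $b$. *)

theory Defs
  imports Main
begin

text \<open>Digraphs are given by their arc sets (pairs of vertices).
  A directed path is a nonempty list of distinct vertices; its length is
  the number of arcs, i.e. the number of vertices minus one.\<close>

definition path_arcs :: "'a list \<Rightarrow> ('a \<times> 'a) set" where
  "path_arcs xs = set (zip xs (tl xs))"

definition plen :: "'a list \<Rightarrow> nat" where
  "plen xs = length xs - 1"

definition inner :: "'a list \<Rightarrow> 'a list" where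
  "inner xs = butlast (tl xs)"

definition dpath :: "('a \<times> 'a) set \<Rightarrow> 'a list \<Rightarrow> bool" where
  "dpath E xs \<longleftrightarrow> xs \<noteq> [] \<and> distinct xs \<and> path_arcs xs \<subseteq> E"

definition cycle_arcs :: "'a list \<Rightarrow> ('a \<times> 'a) set" where
  "cycle_arcs cs = set (zip cs (tl cs @ [hd cs]))"

definition gadget_I :: "nat \<Rightarrow> 'a set \<Rightarrow> ('a \<times> 'a) set \<Rightarrow> 'a \<Rightarrow> 'a \<Rightarrow> bool" where
  "gadget_I b V E p q \<longleftrightarrow>
     (\<exists>cs. distinct cs \<and> 2 \<le> length cs \<and> length cs \<ge> 4 * b^2 \<and>
           V = set cs \<and> E = cycle_arcs cs \<and> (p, q) \<in> E)"

definition gadget_II_basic :: "nat \<Rightarrow> 'a set \<Rightarrow> ('a \<times> 'a) set \<Rightarrow> 'a \<Rightarrow> 'a \<Rightarrow> bool" where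
  "gadget_II_basic b V E p q \<longleftrightarrow>
     (\<exists>r P1. P1 \<noteq> [] \<and> distinct P1 \<and> hd P1 = r \<and> last P1 = p \<and>
             plen P1 \<ge> 2 * b^2 + b - 2 \<and> q \<notin> set P1 \<and>
             V = insert q (set P1) \<and>
             E = path_arcs P1 \<union> {(x, q) | x. x \<in> set P1})"

definition gadget_III :: "nat \<Rightarrow> 'a set \<Rightarrow> ('a \<times> 'a) set \<Rightarrow> 'a \<Rightarrow> 'a \<Rightarrow> bool" where
  "gadget_III b V E p q \<longleftrightarrow>
     (\<exists>r P1 P2. p \<noteq> q \<and>
        P1 \<noteq> [] \<and> distinct P1 \<and> hd P1 = p \<and> last P1 = r \<and>
        P2 \<noteq> [] \<and> distinct P2 \<and> hd P2 = q \<and> last P2 = r \<and>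
        set (inner P1) \<inter> set P2 = {} \<and> set (inner P2) \<inter> set P1 = {} \<and>
        plen P1 \<ge> 2 * b - 1 \<and> plen P2 \<ge> 2 * b - 1 \<and>
        V = set P1 \<union> set P2 \<and>
        E = {(p, q)} \<union> path_arcs P1 \<union> path_arcs P2)"

definition trivial_gadget :: "'a set \<Rightarrow> ('a \<times> 'a) set \<Rightarrow> 'a \<Rightarrow> 'a \<Rightarrow> bool" where
  "trivial_gadget V E p q \<longleftrightarrow> V = {p, q} \<and> E = {(p, q)}"

text \<open>A chain: spine vs = [v0,...,vm], arc partition A1, A2 of the spine arcs,
  and gadgets G e = (V(G_e), A(G_e)) for e in A2.\<close>
definition chain :: "nat \<Rightarrow> 'a list \<Rightarrow> ('a \<times> 'a) set \<Rightarrow> ('a \<times> 'a) set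
                     \<Rightarrow> ('a \<times> 'a \<Rightarrow> 'a set \<times> ('a \<times> 'a) set) \<Rightarrow> bool" where
  "chain b vs A1 A2 G \<longleftrightarrow>
     vs \<noteq> [] \<and> distinct vs \<and>
     A1 \<union> A2 = path_arcs vs \<and> A1 \<inter> A2 = {} \<and>
     (\<forall>e\<in>A2. \<not> trivial_gadget (fst (G e)) (snd (G e)) (fst e) (snd e) \<and>
        (gadget_I b (fst (G e)) (snd (G e)) (fst e) (snd e) \<or>
         gadget_II_basic b (fst (G e)) (snd (G e)) (fst e) (snd e) \<or>
         gadget_III b (fst (G e)) (snd (G e)) (fst e) (snd e))) \<and>
     (\<forall>e\<in>A2. fst (G e) \<inter> set vs = {fst e, snd e}) \<and>
     (\<forall>e\<in>A2. \<forall>f\<in>A2. e \<noteq> f \<longrightarrow> fst (G e) \<inter> fst (G f) \<subseteq> set vs)"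

definition chain_arcs :: "'a list \<Rightarrow> ('a \<times> 'a) set
                     \<Rightarrow> ('a \<times> 'a \<Rightarrow> 'a set \<times> ('a \<times> 'a) set) \<Rightarrow> ('a \<times> 'a) set" where
  "chain_arcs vs A2 G = path_arcs vs \<union> (\<Union>e\<in>A2. snd (G e))"

definition alt_path ::
  "('a \<times> 'a) set \<Rightarrow> nat \<Rightarrow> nat \<Rightarrow> (nat \<Rightarrow> 'a) \<Rightarrow> (nat \<Rightarrow> 'a)
     \<Rightarrow> (nat \<Rightarrow> 'a list) \<Rightarrow> (nat \<Rightarrow> 'a list) \<Rightarrow> bool" where
  "alt_path E a b s t Q Q' \<longleftrightarrow>
     1 \<le> a \<and>
     distinct (map s [1..<a+1] @ map t [1..<a+1]) \<and>
     (\<forall>i\<in>{1..a}. dpath E (Q i) \<and> hd (Q i) = s i \<and> last (Q i) = t i) \<and>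
     (\<forall>i\<in>{1..<a}. dpath E (Q' i) \<and> hd (Q' i) = s (Suc i) \<and> last (Q' i) = t i) \<and>
     (let I = {(False, i) | i. i \<in> {1..a}} \<union> {(True, i) | i. i \<in> {1..<a}};
          F = (\<lambda>(k, i). if k then Q' i else Q i)
      in \<forall>x\<in>I. \<forall>y\<in>I. x \<noteq> y \<longrightarrow> set (inner (F x)) \<inter> set (F y) = {}) \<and>
     (\<forall>i. 2 \<le> i \<and> i \<le> a - 1 \<longrightarrow> plen (Q i) \<ge> b) \<and>
     (\<forall>i\<in>{1..<a}. plen (Q' i) \<ge> b)"

definition strong_alt_path ::
  "('a \<times> 'a) set \<Rightarrow> nat \<Rightarrow> nat \<Rightarrow> (nat \<Rightarrow> 'a) \<Rightarrow> (nat \<Rightarrow> 'a)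
     \<Rightarrow> (nat \<Rightarrow> 'a list) \<Rightarrow> (nat \<Rightarrow> 'a list) \<Rightarrow> bool" where
  "strong_alt_path E a b s t Q Q' \<longleftrightarrow>
     alt_path E a b s t Q Q' \<and> plen (Q 1) \<ge> b \<and> plen (Q a) \<ge> b"

end

theory Submission
  imports Defs
begin


lemma path_arcs_nth:
  "(u, v) \<in> path_arcs xs \<longleftrightarrow> (\<exists>i. Suc i < length xs \<and> xs ! i = u \<and> xs ! Suc i = v)"
  unfolding path_arcs_def set_zip
  by (auto simp: nth_tl) (metis Suc_lessD length_tl less_diff_conv nth_tl add_Suc_right add_0_right)

lemma path_arcs_rev:
  "(u, v) \<in> path_arcs (rev xs) \<longleftrightarrow> (v, u) \<in> path_arcs xs"
proof
  assume "(u, v) \<in> path_arcs (rev xs)"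
  then obtain i where i: "Suc i < length xs" "rev xs ! i = u" "rev xs ! Suc i = v"
    by (auto simp: path_arcs_nth)
  show "(v, u) \<in> path_arcs xs" unfolding path_arcs_nth
    apply (rule exI[of _ "length xs - Suc (Suc i)"])
    using i by (auto simp: rev_nth Suc_diff_Suc)
next
  assume "(v, u) \<in> path_arcs xs"
  then obtain i where i: "Suc i < length xs" "xs ! i = v" "xs ! Suc i = u"
    by (auto simp: path_arcs_nth)
  show "(u, v) \<in> path_arcs (rev xs)" unfolding path_arcs_nth
    apply (rule exI[of _ "length xs - Suc (Suc i)"])
    using i by (auto simp: rev_nth Suc_diff_Suc)
qed

lemma path_arcs_map_upt:
  assumes "\<And>j. lo \<le> j \<Longrightarrow> j < hi \<Longrightarrow> (f j, f (Suc j)) \<in> E"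
  shows "path_arcs (map f [lo..<Suc hi]) \<subseteq> E"
proof
  fix e assume "e \<in> path_arcs (map f [lo..<Suc hi])"
  then obtain u v where e: "e = (u, v)" "(u, v) \<in> path_arcs (map f [lo..<Suc hi])"
    by (cases e) auto
  then obtain i where "Suc i < length (map f [lo..<Suc hi])" "map f [lo..<Suc hi] ! i = u"
    "map f [lo..<Suc hi] ! Suc i = v" by (auto simp: path_arcs_nth)
  then have "u = f (lo + i)" "v = f (Suc (lo + i))" "lo + i < hi" by (auto simp del: upt_Suc)
  then show "e \<in> E" using assms[of "lo + i"] e by auto
qed

lemma set_inner_map_upt:
  "set (inner (map f [lo..<Suc hi])) = f ` {lo<..<hi}"
proof -
  have "inner (map f [lo..<Suc hi]) = map f [Suc lo..<hi]"
  proof -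
    have "butlast [Suc lo..<Suc hi] = [Suc lo..<hi]"
      by (cases "Suc lo \<le> hi") auto
    then show ?thesis
      unfolding inner_def by (simp add: map_tl[symmetric] map_butlast[symmetric] del: upt_Suc)
  qed
  then show ?thesis by auto
qed

lemma set_inner_rev: "set (inner (rev xs)) = set (inner xs)"
  unfolding inner_def by (metis butlast_rev butlast_tl rev_rev_ident set_rev)

lemma plen_map_upt: "plen (map f [lo..<Suc hi]) = Suc hi - lo - 1"
  by (simp add: plen_def)

lemma strict_mono_upto:
  assumes "\<forall>k<M. (f::nat\<Rightarrow>nat) k < f (Suc k)"
  shows "i < j \<Longrightarrow> j \<le> M \<Longrightarrow> f i < f j"
proof (induction j)
  case 0 then show ?case by simp
next
  case (Suc j)
  have "f j < f (Suc j)" using assms Suc.prems(2) by simp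
  show ?case
  proof (cases "i = j")
    case True then show ?thesis using \<open>f j < f (Suc j)\<close> by simp
  next
    case False
    then have "f i < f j" using Suc by simp
    then show ?thesis using \<open>f j < f (Suc j)\<close> by simp
  qed
qed




definition walk :: "('a \<times> 'a) set \<Rightarrow> 'a set \<Rightarrow> nat \<Rightarrow> nat \<Rightarrow> nat \<Rightarrow> 'a \<Rightarrow> 'a
   \<Rightarrow> nat \<Rightarrow> (nat \<Rightarrow> 'a) \<Rightarrow> (nat \<Rightarrow> nat) \<Rightarrow> bool" where
  "walk E V b a r u z N w x \<longleftrightarrow> inj_on w {..N} \<and> w ` {..N} \<subseteq> V \<and> w 0 = u \<and> w N = z \<and>
     x 0 = 0 \<and> x (2*a-1) = N \<and> r \<le> x 1 \<and>
     (\<forall>k. 1 \<le> k \<longrightarrow> k < 2*a-1 \<longrightarrow> x k + b \<le> x (Suc k)) \<and>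
     (\<forall>k<2*a-1. \<forall>j. x k \<le> j \<longrightarrow> j < x (Suc k) \<longrightarrow>
        (if even k then (w j, w (Suc j)) \<in> E else (w (Suc j), w j) \<in> E))"

lemma walk_to_alt:
  assumes W: "walk E V b a b u z N w x" and b: "1 \<le> b" and a: "1 \<le> a"
  shows "\<exists>s t Q Q'. strong_alt_path E a b s t Q Q' \<and> s 1 = u \<and> t a = z"
proof -
  define M where "M = 2*a-1"
  have inj: "inj_on w {..N}" and x0: "x 0 = 0" and xM: "x M = N" and x1: "b \<le> x 1"
    and xs: "\<And>k. 1 \<le> k \<Longrightarrow> k < M \<Longrightarrow> x k + b \<le> x (Suc k)"
    and dir: "\<And>k j. k < M \<Longrightarrow> x k \<le> j \<Longrightarrow> j < x (Suc k) \<Longrightarrow>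
        (if even k then (w j, w (Suc j)) \<in> E else (w (Suc j), w j) \<in> E)"
    and w0: "w 0 = u" and wN: "w N = z"
    using W unfolding walk_def M_def by auto
  have step: "\<forall>k<M. x k < x (Suc k)"
  proof (intro allI impI)
    fix k assume "k < M"
    show "x k < x (Suc k)"
    proof (cases "k = 0")
      case True then show ?thesis using x0 x1 b by simp
    next
      case False then show ?thesis using xs[of k] \<open>k < M\<close> b by simp
    qed
  qed
  have mono: "\<And>i j. i < j \<Longrightarrow> j \<le> M \<Longrightarrow> x i < x j"
    using strict_mono_upto[OF step] by blast
  have monole: "\<And>i j. i \<le> j \<Longrightarrow> j \<le> M \<Longrightarrow> x i \<le> x j"
    using mono by (metis le_eq_less_or_eq)
  have xle: "\<And>k. k \<le> M \<Longrightarrow> x k \<le> N" using monole xM by auto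
  have xinj: "\<And>i j. i \<le> M \<Longrightarrow> j \<le> M \<Longrightarrow> x i = x j \<Longrightarrow> i = j"
    using mono by (metis linorder_neqE_nat less_irrefl)
  define sg where "sg k = map w [x k..<Suc (x (Suc k))]" for k
  have sg_ne: "sg k \<noteq> []" if "k < M" for k
  proof -
    have "x k \<le> x (Suc k)" using step that by (simp add: less_imp_le)
    then show ?thesis unfolding sg_def by (simp del: upt_Suc)
  qed
  have sg_hd: "hd (sg k) = w (x k)" if "k < M" for k
  proof -
    have "x k \<le> x (Suc k)" using step that by (simp add: less_imp_le)
    then show ?thesis unfolding sg_def by (simp add: hd_map del: upt_Suc)
  qed
  have sg_last: "last (sg k) = w (x (Suc k))" if "k < M" for k
  proof -
    have "x k \<le> x (Suc k)" using step that by (simp add: less_imp_le)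
    then show ?thesis unfolding sg_def by (simp add: last_map del: upt_Suc)
  qed
  have sg_set: "set (sg k) = w ` {x k..x (Suc k)}" for k
    unfolding sg_def by auto
  have sg_inner: "set (inner (sg k)) = w ` {x k<..<x (Suc k)}" for k
    unfolding sg_def by (rule set_inner_map_upt)
  have sg_plen: "plen (sg k) = x (Suc k) - x k" for k
    unfolding sg_def plen_map_upt by simp
  have sg_dist: "distinct (sg k)" if "k < M" for k
    unfolding sg_def distinct_map
  proof
    show "inj_on w (set [x k..<Suc (x (Suc k))])"
      using xle[of "Suc k"] that by (auto intro: inj_on_subset[OF inj])
  qed simp
  have sg_arcs_even: "path_arcs (sg k) \<subseteq> E" if "k < M" "even k" for k
    unfolding sg_def using dir[OF that(1)] that(2) by (intro path_arcs_map_upt) auto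
  have sg_arcs_odd: "path_arcs (rev (sg k)) \<subseteq> E" if "k < M" "odd k" for k
  proof
    fix e assume "e \<in> path_arcs (rev (sg k))"
    then obtain p q where e: "e = (p, q)" "(q, p) \<in> path_arcs (sg k)"
      by (cases e) (auto simp: path_arcs_rev)
    have "path_arcs (sg k) \<subseteq> {(p, q). (q, p) \<in> E}"
      unfolding sg_def using dir[OF that(1)] that(2) by (intro path_arcs_map_upt) auto
    then show "e \<in> E" using e by auto
  qed
  have sg_disj: "set (inner (sg k)) \<inter> set (sg k') = {}" if "k < M" "k' < M" "k \<noteq> k'" for k k'
  proof -
    have "{x k<..<x (Suc k)} \<inter> {x k'..x (Suc k')} = {}"
    proof (cases "k < k'")
      case True
      then have "x (Suc k) \<le> x k'" using monole[of "Suc k" k'] that by simp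
      then show ?thesis by auto
    next
      case False
      then have "x (Suc k') \<le> x k" using monole[of "Suc k'" k] that by simp
      then show ?thesis by auto
    qed
    moreover have "{x k<..<x (Suc k)} \<subseteq> {..N}" "{x k'..x (Suc k')} \<subseteq> {..N}"
      using xle[of "Suc k"] xle[of "Suc k'"] that by auto
    ultimately show ?thesis unfolding sg_inner sg_set
      using inj_on_image_Int[OF inj] by (metis image_empty)
  qed
  define s where "s i = w (x (2*i-2))" for i
  define t where "t i = w (x (2*i-1))" for i
  define Q where "Q i = sg (2*i-2)" for i
  define Q' where "Q' i = rev (sg (2*i-1))" for i
  have "strong_alt_path E a b s t Q Q'"
    unfolding strong_alt_path_def alt_path_def
  proof (intro conjI)
    show "1 \<le> a" by fact
    show "distinct (map s [1..<a + 1] @ map t [1..<a + 1])"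
    proof -
      have "map s [1..<a + 1] @ map t [1..<a + 1] = map (\<lambda>k. w (x k)) (map (\<lambda>i. 2*i-2) [1..<a+1] @ map (\<lambda>i. 2*i-1) [1..<a+1])"
        by (simp add: s_def t_def)
      moreover have "distinct (map (\<lambda>i. 2*i-2) [1..<a+1] @ map (\<lambda>i. 2*i-1) [1..<a+1])"
      proof -
        have par: "2*i-2 \<noteq> 2*j-1" if "1 \<le> i" "1 \<le> (j::nat)" for i j
          using that by presburger
        show ?thesis unfolding distinct_append
          using par by (auto simp: distinct_map inj_on_def)
      qed
      moreover have "inj_on (\<lambda>k. w (x k)) (set (map (\<lambda>i. 2*i-2) [1..<a+1] @ map (\<lambda>i. 2*i-1) [1..<a+1]))"
      proof (rule inj_onI)
        fix i j assume i: "i \<in> set (map (\<lambda>i. 2*i-2) [1..<a+1] @ map (\<lambda>i. 2*i-1) [1..<a+1])"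
          and j: "j \<in> set (map (\<lambda>i. 2*i-2) [1..<a+1] @ map (\<lambda>i. 2*i-1) [1..<a+1])"
          and e: "w (x i) = w (x j)"
        have "i \<le> M" "j \<le> M" using i j unfolding M_def by auto
        then have "x i = x j" using e inj xle by (auto dest: inj_onD)
        then show "i = j" using xinj \<open>i \<le> M\<close> \<open>j \<le> M\<close> by blast
      qed
      ultimately show ?thesis by (metis (no_types, lifting) distinct_map)
    qed
    show "\<forall>i\<in>{1..a}. dpath E (Q i) \<and> hd (Q i) = s i \<and> last (Q i) = t i"
    proof
      fix i assume i: "i \<in> {1..a}"
      then have k: "2*i-2 < M" "even (2*i-2)" "Suc (2*i-2) = 2*i-1" unfolding M_def by auto
      show "dpath E (Q i) \<and> hd (Q i) = s i \<and> last (Q i) = t i"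
        unfolding dpath_def Q_def s_def t_def
        using sg_ne[OF k(1)] sg_dist[OF k(1)] sg_arcs_even[OF k(1,2)] sg_hd[OF k(1)] sg_last[OF k(1)] k(3)
        by simp
    qed
    show "\<forall>i\<in>{1..<a}. dpath E (Q' i) \<and> hd (Q' i) = s (Suc i) \<and> last (Q' i) = t i"
    proof
      fix i assume i: "i \<in> {1..<a}"
      then have k: "2*i-1 < M" "odd (2*i-1)" "Suc (2*i-1) = 2 * Suc i - 2" unfolding M_def by auto
      show "dpath E (Q' i) \<and> hd (Q' i) = s (Suc i) \<and> last (Q' i) = t i"
        unfolding dpath_def Q'_def s_def t_def
        using sg_ne[OF k(1)] sg_dist[OF k(1)] sg_arcs_odd[OF k(1,2)] sg_hd[OF k(1)] sg_last[OF k(1)] k(3)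
        by (simp add: hd_rev last_rev)
    qed
    show "let I = {(False, i) |i. i \<in> {1..a}} \<union> {(True, i) |i. i \<in> {1..<a}};
        F = \<lambda>(k, i). if k then Q' i else Q i
    in \<forall>x\<in>I. \<forall>y\<in>I. x \<noteq> y \<longrightarrow> set (inner (F x)) \<inter> set (F y) = {}"
      unfolding Let_def
    proof (intro ballI impI)
      fix p q
      assume p: "p \<in> {(False, i) |i. i \<in> {1..a}} \<union> {(True, i) |i. i \<in> {1..<a}}"
        and q: "q \<in> {(False, i) |i. i \<in> {1..a}} \<union> {(True, i) |i. i \<in> {1..<a}}"
        and pq: "p \<noteq> q"
      define kk where "kk = (\<lambda>(f::bool, i::nat). if f then 2*i-1 else 2*i-2)"
      have Fk: "set (inner ((\<lambda>(k, i). if k then Q' i else Q i) y)) = set (inner (sg (kk y)))"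
        "set ((\<lambda>(k, i). if k then Q' i else Q i) y) = set (sg (kk y))" for y
        unfolding kk_def Q_def Q'_def by (auto simp: set_inner_rev split: prod.splits)
      have "kk p < M" "kk q < M" using p q unfolding kk_def M_def by auto
      moreover have "kk p \<noteq> kk q"
      proof -
        have par: "2*i-2 \<noteq> 2*j-1" if "1 \<le> i" "1 \<le> (j::nat)" for i j
          using that by presburger
        have par': "2*i-1 \<noteq> 2*j-2" if "1 \<le> i" "1 \<le> (j::nat)" for i j
          using that by presburger
        show ?thesis using p q pq par par' unfolding kk_def by auto
      qed
      ultimately show "set (inner ((\<lambda>(k, i). if k then Q' i else Q i) p)) \<inter>
          set ((\<lambda>(k, i). if k then Q' i else Q i) q) = {}"
        unfolding Fk using sg_disj by blast
    qed
    show "\<forall>i. 2 \<le> i \<and> i \<le> a - 1 \<longrightarrow> b \<le> plen (Q i)"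
    proof (intro allI impI)
      fix i assume "2 \<le> i \<and> i \<le> a - 1"
      then have "1 \<le> 2*i-2" "2*i-2 < M" "Suc (2*i-2) = 2*i-1" unfolding M_def by auto
      then show "b \<le> plen (Q i)" unfolding Q_def sg_plen using xs[of "2*i-2"] by simp
    qed
    show "\<forall>i\<in>{1..<a}. b \<le> plen (Q' i)"
    proof
      fix i assume "i \<in> {1..<a}"
      then have "1 \<le> 2*i-1" "2*i-1 < M" "Suc (2*i-1) = 2*i" unfolding M_def by auto
      then show "b \<le> plen (Q' i)" unfolding Q'_def plen_def length_rev
        using sg_plen[of "2*i-1"] xs[of "2*i-1"] by (simp add: plen_def)
    qed
    show "b \<le> plen (Q 1)" unfolding Q_def sg_plen using x0 x1 by simp
    show "b \<le> plen (Q a)"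
    proof (cases "a = 1")
      case True then show ?thesis unfolding Q_def sg_plen using x0 x1 by simp
    next
      case False
      then have "1 \<le> 2*a-2" "2*a-2 < M" "Suc (2*a-2) = 2*a-1" using a unfolding M_def by auto
      then show "b \<le> plen (Q a)" unfolding Q_def sg_plen using xs[of "2*a-2"] by simp
    qed
  qed
  moreover have "s 1 = u" unfolding s_def using x0 w0 by simp
  moreover have "t a = z" unfolding t_def using xM wN unfolding M_def by simp
  ultimately show ?thesis by blast
qed




definition detour :: "nat \<Rightarrow> 'a set \<Rightarrow> ('a \<times> 'a) set \<Rightarrow> 'a \<Rightarrow> 'a \<Rightarrow> bool" where
  "detour b V Eg p q \<longleftrightarrow> (\<exists>L \<alpha> \<beta> d. \<alpha> + b \<le> \<beta> \<and> \<beta> \<le> L \<and> d 0 = p \<and> d L = q \<and>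
     inj_on d {..L} \<and> d ` {..L} \<subseteq> V \<and>
     (\<forall>j<\<alpha>. (d j, d (Suc j)) \<in> Eg) \<and>
     (\<forall>j. \<alpha> \<le> j \<longrightarrow> j < \<beta> \<longrightarrow> (d (Suc j), d j) \<in> Eg) \<and>
     (\<forall>j. \<beta> \<le> j \<longrightarrow> j < L \<longrightarrow> (d j, d (Suc j)) \<in> Eg))"

lemma b_le_sq: "(b::nat) \<le> b^2"
  by (cases b) (auto simp: power2_eq_square)

lemma path_arcs_nthI: "Suc i < length xs \<Longrightarrow> (xs ! i, xs ! Suc i) \<in> path_arcs xs"
  by (auto simp: path_arcs_nth)

lemma inner_nthI: "0 < i \<Longrightarrow> Suc i < length xs \<Longrightarrow> xs ! i \<in> set (inner xs)"
proof -
  assume i: "0 < i" "Suc i < length xs"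
  have "inner xs ! (i - 1) = xs ! i"
    unfolding inner_def using i by (simp add: nth_butlast nth_tl)
  moreover have "i - 1 < length (inner xs)" unfolding inner_def using i by simp
  ultimately show ?thesis by (metis nth_mem)
qed

lemma detour_II:
  assumes b: "1 \<le> b" and g: "gadget_II_basic b V Eg p q"
  shows "detour b V Eg p q"
proof -
  obtain r P1 where P: "P1 \<noteq> []" "distinct P1" "hd P1 = r" "last P1 = p"
    "plen P1 \<ge> 2 * b^2 + b - 2" "q \<notin> set P1" "V = insert q (set P1)"
    "Eg = path_arcs P1 \<union> {(x, q) | x. x \<in> set P1}"
    using g unfolding gadget_II_basic_def by blast
  define l where "l = length P1"
  have "b \<le> b^2" by (rule b_le_sq)
  then have bl: "b \<le> l - 1" using P(5) b unfolding plen_def l_def by linarith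
  define d where "d j = (if j < l then P1 ! (l - 1 - j) else q)" for j
  show ?thesis unfolding detour_def
  proof (intro exI conjI)
    show "0 + b \<le> l - 1" using bl by simp
    show "l - 1 \<le> l" by simp
    show "d 0 = p" unfolding d_def using P(1,4) l_def by (simp add: last_conv_nth)
    show "d l = q" unfolding d_def by simp
    show "inj_on d {..l}"
    proof (rule inj_onI)
      fix i j assume i: "i \<in> {..l}" and j: "j \<in> {..l}" and e: "d i = d j"
      show "i = j"
      proof (cases "i < l"; cases "j < l")
        assume "i < l" "j < l"
        then show ?thesis using e P(2) unfolding d_def l_def
          by (simp add: nth_eq_iff_index_eq)
      next
        assume "i < l" "\<not> j < l"
        moreover have "P1 ! (l - 1 - i) \<in> set P1" using \<open>i < l\<close> unfolding l_def by simp
        ultimately show ?thesis using e P(6) unfolding d_def by simp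
      next
        assume "\<not> i < l" "j < l"
        moreover have "P1 ! (l - 1 - j) \<in> set P1" using \<open>j < l\<close> unfolding l_def by simp
        ultimately show ?thesis using e P(6) unfolding d_def by simp
      next
        assume "\<not> i < l" "\<not> j < l"
        then show ?thesis using i j by simp
      qed
    qed
    show "d ` {..l} \<subseteq> V" unfolding d_def P(7) l_def by auto
    show "\<forall>j<0. (d j, d (Suc j)) \<in> Eg" by simp
    show "\<forall>j. 0 \<le> j \<longrightarrow> j < l - 1 \<longrightarrow> (d (Suc j), d j) \<in> Eg"
    proof (intro allI impI)
      fix j assume "0 \<le> j" "j < l - 1"
      then have "Suc (l - 2 - j) < length P1" "Suc (l - 2 - j) = l - 1 - j" "l - 1 - Suc j = l - 2 - j"
        unfolding l_def by auto
      then show "(d (Suc j), d j) \<in> Eg" unfolding d_def P(8)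
        using path_arcs_nthI[of "l - 2 - j" P1] \<open>j < l - 1\<close> by auto
    qed
    show "\<forall>j. l - 1 \<le> j \<longrightarrow> j < l \<longrightarrow> (d j, d (Suc j)) \<in> Eg"
    proof (intro allI impI)
      fix j assume "l - 1 \<le> j" "j < l"
      then have "j = l - 1" by simp
      then show "(d j, d (Suc j)) \<in> Eg" unfolding d_def P(8) using P(1) l_def by auto
    qed
  qed
qed


lemma cyc_nth: "cs \<noteq> [] \<Longrightarrow> i < length cs \<Longrightarrow>
   (tl cs @ [hd cs]) ! i = cs ! (if Suc i < length cs then Suc i else 0)"
  by (auto simp: nth_append nth_tl hd_conv_nth)

lemma cycle_arcs_nth: "cs \<noteq> [] \<Longrightarrow> (u, v) \<in> cycle_arcs cs \<longleftrightarrow>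
   (\<exists>k<length cs. u = cs ! k \<and> v = cs ! (if Suc k < length cs then Suc k else 0))"
  unfolding cycle_arcs_def set_zip by (auto simp: cyc_nth)

lemma detour_I:
  assumes b: "1 \<le> b" and g: "gadget_I b V Eg p q"
  shows "detour b V Eg p q"
proof -
  obtain cs where C: "distinct cs" "2 \<le> length cs" "length cs \<ge> 4 * b^2"
    "V = set cs" "Eg = cycle_arcs cs" "(p, q) \<in> Eg"
    using g unfolding gadget_I_def by blast
  define n where "n = length cs"
  have ne: "cs \<noteq> []" using C(2) by auto
  obtain k where k: "k < n" "p = cs ! k" "q = cs ! (if Suc k < n then Suc k else 0)"
    using C(5,6) cycle_arcs_nth[OF ne] n_def by auto
  have "b \<le> b^2" by (rule b_le_sq)
  then have bl: "b \<le> n - 1" using C(3) b unfolding n_def by linarith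
  define idx where "idx j = (if j \<le> k then k - j else k + n - j)" for j
  have idx_lt: "idx j < n" if "j \<le> n - 1" for j using that k(1) unfolding idx_def by auto
  have idx_inj: "idx i = idx j \<Longrightarrow> i \<le> n - 1 \<Longrightarrow> j \<le> n - 1 \<Longrightarrow> i = j" for i j
    using k(1) unfolding idx_def by (auto split: if_splits)
  define d where "d j = cs ! idx j" for j
  show ?thesis unfolding detour_def
  proof (intro exI conjI)
    show "0 + b \<le> n - 1" using bl by simp
    show "n - 1 \<le> n - 1" by simp
    show "d 0 = p" unfolding d_def idx_def using k by simp
    show "d (n - 1) = q" unfolding d_def idx_def using k by auto
    show "inj_on d {..n - 1}"
    proof (rule inj_onI)
      fix i j assume i: "i \<in> {..n - 1}" and j: "j \<in> {..n - 1}" and e: "d i = d j"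
      then have "idx i = idx j" using idx_lt C(1) unfolding d_def n_def
        by (simp add: nth_eq_iff_index_eq)
      then show "i = j" using idx_inj i j by auto
    qed
    show "d ` {..n - 1} \<subseteq> V" unfolding d_def C(4) using idx_lt n_def by auto
    show "\<forall>j<0. (d j, d (Suc j)) \<in> Eg" by simp
    show "\<forall>j. 0 \<le> j \<longrightarrow> j < n - 1 \<longrightarrow> (d (Suc j), d j) \<in> Eg"
    proof (intro allI impI)
      fix j assume "0 \<le> j" "j < n - 1"
      then have "idx (Suc j) < n" "idx j = (if Suc (idx (Suc j)) < n then Suc (idx (Suc j)) else 0)"
        using k(1) unfolding idx_def by auto
      then show "(d (Suc j), d j) \<in> Eg" unfolding d_def C(5) cycle_arcs_nth[OF ne]
        by (intro exI[of _ "idx (Suc j)"]) (simp add: n_def)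
    qed
    show "\<forall>j. n - 1 \<le> j \<longrightarrow> j < n - 1 \<longrightarrow> (d j, d (Suc j)) \<in> Eg" by simp
  qed
qed

lemma detour_III:
  assumes b: "1 \<le> b" and g: "gadget_III b V Eg p q"
  shows "detour b V Eg p q"
proof -
  obtain r P1 P2 where P: "p \<noteq> q"
        "P1 \<noteq> []" "distinct P1" "hd P1 = p" "last P1 = r"
        "P2 \<noteq> []" "distinct P2" "hd P2 = q" "last P2 = r"
        "set (inner P1) \<inter> set P2 = {}" "set (inner P2) \<inter> set P1 = {}"
        "plen P1 \<ge> 2 * b - 1" "plen P2 \<ge> 2 * b - 1"
        "V = set P1 \<union> set P2"
        "Eg = {(p, q)} \<union> path_arcs P1 \<union> path_arcs P2"
    using g unfolding gadget_III_def by blast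
  define l1 where "l1 = length P1"
  define l2 where "l2 = length P2"
  have l1: "2 \<le> l1" using P(12) b unfolding plen_def l1_def by linarith
  have l2: "b + 1 \<le> l2" using P(13) b unfolding plen_def l2_def by linarith
  have P1_0: "P1 ! 0 = p" using P(2,4) by (simp add: hd_conv_nth)
  have P2_0: "P2 ! 0 = q" using P(6,8) by (simp add: hd_conv_nth)
  have P1_l: "P1 ! (l1 - 1) = r" using P(2,5) l1_def by (simp add: last_conv_nth)
  have P2_l: "P2 ! (l2 - 1) = r" using P(6,9) l2_def by (simp add: last_conv_nth)
  define L where "L = l1 + l2 - 2"
  define d where "d j = (if j < l1 then P1 ! j else P2 ! (l1 + l2 - 2 - j))" for j
  have cross: "P1 ! i \<noteq> P2 ! j" if "i < l1" "j < l2 - 1" for i j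
  proof
    assume e: "P1 ! i = P2 ! j"
    show False
    proof (cases "j = 0")
      case True
      then have qe: "P1 ! i = q" using e P2_0 by simp
      show False
      proof (cases "i = 0")
        case True then show False using qe P1_0 P(1) by simp
      next
        case False
        show False
        proof (cases "Suc i < l1")
          case True
          then have "P1 ! i \<in> set (inner P1)" using inner_nthI[of i P1] False l1_def by simp
          moreover have "q \<in> set P2" using P(6,8) by auto
          ultimately show False using qe P(10) by auto
        next
          case False
          then have "i = l1 - 1" using that by simp
          then have "P2 ! 0 = P2 ! (l2 - 1)" using qe P1_l P2_0 P2_l by simp
          moreover have "0 < length P2" "length P2 - 1 < length P2" "length P2 - 1 \<noteq> 0"
            using l2 l2_def b by auto
          ultimately show False using P(7) l2_def nth_eq_iff_index_eq by metis
        qed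
      qed
    next
      case False
      then have "P2 ! j \<in> set (inner P2)" using inner_nthI[of j P2] that l2_def by simp
      moreover have "P1 ! i \<in> set P1" using that l1_def by simp
      ultimately show False using e P(11) by auto
    qed
  qed
  show ?thesis unfolding detour_def
  proof (intro exI conjI)
    show "l1 - 1 + b \<le> L" using l1 l2 unfolding L_def by simp
    show "L \<le> L" by simp
    show "d 0 = p" unfolding d_def using l1 P1_0 by simp
    have "\<not> l1 + l2 - 2 < l1" using l1 l2 b by simp
    then show "d L = q" unfolding d_def L_def using P2_0 by simp
    show "inj_on d {..L}"
    proof (rule inj_onI)
      fix i j assume i: "i \<in> {..L}" and j: "j \<in> {..L}" and e: "d i = d j"
      show "i = j"
      proof (cases "i < l1"; cases "j < l1")
        assume "i < l1" "j < l1"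
        then show ?thesis using e P(3) unfolding d_def l1_def
          by (simp add: nth_eq_iff_index_eq)
      next
        assume "i < l1" "\<not> j < l1"
        then have "l1 + l2 - 2 - j < l2 - 1" using l1 l2 b by arith
        then show ?thesis using e cross[of i "l1 + l2 - 2 - j"] \<open>i < l1\<close> \<open>\<not> j < l1\<close>
          unfolding d_def by simp
      next
        assume "\<not> i < l1" "j < l1"
        then have "l1 + l2 - 2 - i < l2 - 1" using l1 l2 b by arith
        then show ?thesis using e cross[of j "l1 + l2 - 2 - i"] \<open>j < l1\<close> \<open>\<not> i < l1\<close>
          unfolding d_def by simp
      next
        assume "\<not> i < l1" "\<not> j < l1"
        then have "l1 + l2 - 2 - i < l2" "l1 + l2 - 2 - j < l2" using l1 l2 by auto
        then have "l1 + l2 - 2 - i = l1 + l2 - 2 - j"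
          using e P(7) \<open>\<not> i < l1\<close> \<open>\<not> j < l1\<close> unfolding d_def l2_def
          by (simp add: nth_eq_iff_index_eq)
        then show ?thesis using i j \<open>\<not> i < l1\<close> \<open>\<not> j < l1\<close> unfolding L_def by simp
      qed
    qed
    show "d ` {..L} \<subseteq> V"
    proof
      fix y assume "y \<in> d ` {..L}"
      then obtain j where j: "j \<le> L" "y = d j" by auto
      show "y \<in> V"
      proof (cases "j < l1")
        case True then show ?thesis using j unfolding d_def P(14) l1_def by simp
      next
        case False
        then have "l1 + l2 - 2 - j < l2" using l1 l2 b by arith
        then show ?thesis using j False unfolding d_def P(14) l2_def by simp
      qed
    qed
    show "\<forall>j<l1 - 1. (d j, d (Suc j)) \<in> Eg"
    proof (intro allI impI)
      fix j assume "j < l1 - 1"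
      then show "(d j, d (Suc j)) \<in> Eg" unfolding d_def P(15)
        using path_arcs_nthI[of j P1] l1_def by auto
    qed
    show "\<forall>j. l1 - 1 \<le> j \<longrightarrow> j < L \<longrightarrow> (d (Suc j), d j) \<in> Eg"
    proof (intro allI impI)
      fix j assume j: "l1 - 1 \<le> j" "j < L"
      define i where "i = l1 + l2 - 3 - j"
      have si: "Suc i = l1 + l2 - 2 - j" "Suc i < l2" "i = l1 + l2 - 2 - Suc j"
        using j l1 l2 b unfolding i_def L_def by arith+
      have "\<not> Suc j < l1" using j l1 by arith
      then have i1: "d (Suc j) = P2 ! i" unfolding d_def si(3) by simp
      have i2: "d j = P2 ! Suc i"
      proof (cases "j < l1")
        case True
        then have "j = l1 - 1" "Suc i = l2 - 1" using j si l1 by arith+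
        then show ?thesis unfolding d_def using True P1_l P2_l by simp
      next
        case False then show ?thesis unfolding d_def si(1) by simp
      qed
      have i: "Suc i < l2" "d (Suc j) = P2 ! i" "d j = P2 ! Suc i" using si i1 i2 by auto
      then show "(d (Suc j), d j) \<in> Eg" unfolding P(15)
        using path_arcs_nthI[of i P2] l2_def by auto
    qed
    show "\<forall>j. L \<le> j \<longrightarrow> j < L \<longrightarrow> (d j, d (Suc j)) \<in> Eg" by simp
  qed
qed




lemma path_arcs_Cons: "vs \<noteq> [] \<Longrightarrow> path_arcs (v # vs) = insert (v, hd vs) (path_arcs vs)"
  unfolding path_arcs_def by (cases vs) auto

lemma path_arcs_single: "path_arcs [v] = {}"
  unfolding path_arcs_def by simp

lemma path_arcs_in_set: "(x, y) \<in> path_arcs vs \<Longrightarrow> x \<in> set vs \<and> y \<in> set vs"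
  unfolding path_arcs_def by (auto dest: set_zip_leftD set_zip_rightD intro: list.set_sel(2) split: if_splits)

lemma finite_path_arcs: "finite (path_arcs vs)"
  unfolding path_arcs_def by simp

lemma chain_Cons:
  assumes ch: "chain b (v # vs) A1 A2 G" and ne: "vs \<noteq> []"
  defines "e \<equiv> (v, hd vs)"
  shows "chain b vs (A1 - {e}) (A2 - {e}) G"
    and "v \<notin> set vs"
    and "\<And>f. f \<in> A2 - {e} \<Longrightarrow> v \<notin> fst (G f)"
    and "e \<notin> path_arcs vs"
    and "A2 - {e} \<subseteq> path_arcs vs"
proof -
  have d: "distinct (v # vs)" and u: "A1 \<union> A2 = path_arcs (v # vs)" and dj: "A1 \<inter> A2 = {}"
    and gad: "\<forall>e\<in>A2. \<not> trivial_gadget (fst (G e)) (snd (G e)) (fst e) (snd e) \<and>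
        (gadget_I b (fst (G e)) (snd (G e)) (fst e) (snd e) \<or>
         gadget_II_basic b (fst (G e)) (snd (G e)) (fst e) (snd e) \<or>
         gadget_III b (fst (G e)) (snd (G e)) (fst e) (snd e))"
    and vi: "\<forall>e\<in>A2. fst (G e) \<inter> set (v # vs) = {fst e, snd e}"
    and pw: "\<forall>e\<in>A2. \<forall>f\<in>A2. e \<noteq> f \<longrightarrow> fst (G e) \<inter> fst (G f) \<subseteq> set (v # vs)"
    using ch unfolding chain_def by auto
  show vn: "v \<notin> set vs" using d by simp
  show en: "e \<notin> path_arcs vs" unfolding e_def using vn path_arcs_in_set by fastforce
  have pa: "path_arcs (v # vs) = insert e (path_arcs vs)" unfolding e_def using path_arcs_Cons[OF ne] .
  show sub: "A2 - {e} \<subseteq> path_arcs vs" using u pa by auto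
  show vf: "v \<notin> fst (G f)" if f: "f \<in> A2 - {e}" for f
  proof
    assume "v \<in> fst (G f)"
    then have "v \<in> {fst f, snd f}" using vi f by auto
    moreover have "fst f \<in> set vs" "snd f \<in> set vs" using f sub path_arcs_in_set[of "fst f" "snd f" vs] by auto
    ultimately show False using vn by auto
  qed
  show "chain b vs (A1 - {e}) (A2 - {e}) G"
    unfolding chain_def
  proof (intro conjI ballI impI)
    show "vs \<noteq> []" by fact
    show "distinct vs" using d by simp
    show "A1 - {e} \<union> (A2 - {e}) = path_arcs vs" using u pa en by auto
    show "(A1 - {e}) \<inter> (A2 - {e}) = {}" using dj by auto
    fix f assume f: "f \<in> A2 - {e}"
    then show "\<not> trivial_gadget (fst (G f)) (snd (G f)) (fst f) (snd f)" using gad by auto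
    show "gadget_I b (fst (G f)) (snd (G f)) (fst f) (snd f) \<or>
         gadget_II_basic b (fst (G f)) (snd (G f)) (fst f) (snd f) \<or>
         gadget_III b (fst (G f)) (snd (G f)) (fst f) (snd f)" using gad f by auto
    have "fst f \<in> set vs" "snd f \<in> set vs" using f sub path_arcs_in_set[of "fst f" "snd f" vs] by auto
    then show "fst (G f) \<inter> set vs = {fst f, snd f}" using vi f by auto
    fix g assume g: "g \<in> A2 - {e}" "f \<noteq> g"
    show "fst (G f) \<inter> fst (G g) \<subseteq> set vs" using pw f g vf[OF f] by auto
  qed
qed


lemma walk_mono: "walk E V b a r u z N w x \<Longrightarrow> V \<subseteq> V2 \<Longrightarrow> walk E V2 b a r u z N w x"
  unfolding walk_def by blast

lemma main_walk:
  fixes b :: nat and E :: "('a \<times> 'a) set"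
  assumes b: "1 \<le> b"
  shows "chain b vs A1 A2 G \<Longrightarrow> chain_arcs vs A2 G \<subseteq> E \<Longrightarrow> 1 \<le> a \<Longrightarrow> r \<le> b \<Longrightarrow>
     (a - 1) * (b + 1) + r \<le> card A2 \<Longrightarrow>
     \<exists>N w x. walk E (set vs \<union> (\<Union>e\<in>A2. fst (G e))) b a r (hd vs) (last vs) N w x"
proof (induction vs arbitrary: A1 A2 a r)
  case Nil
  then show ?case unfolding chain_def by simp
next
  case (Cons v vs)
  note ch = Cons.prems(1)
  show ?case
  proof (cases "vs = []")
    case True
    then have "A2 = {}" using ch unfolding chain_def by (auto simp: path_arcs_single)
    then have a1: "a = 1" "r = 0" using Cons.prems(3,5) by auto
    show ?thesis unfolding walk_def
      by (rule exI[of _ 0], rule exI[of _ "\<lambda>_. v"], rule exI[of _ "\<lambda>_. 0"]) (simp add: a1 True)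
  next
    case False
    define u where "u = hd vs"
    define e where "e = (v, u)"
    define V where "V = set (v # vs) \<union> (\<Union>e\<in>A2. fst (G e))"
    define V' where "V' = set vs \<union> (\<Union>e\<in>A2 - {e}. fst (G e))"
    have ch': "chain b vs (A1 - {e}) (A2 - {e}) G" and vn: "v \<notin> set vs"
      and vf: "\<And>f. f \<in> A2 - {e} \<Longrightarrow> v \<notin> fst (G f)"
      using chain_Cons[OF ch False] unfolding e_def u_def by auto
    have pa: "path_arcs (v # vs) = insert e (path_arcs vs)"
      unfolding e_def u_def using path_arcs_Cons[OF False] .
    have A2sub: "A2 \<subseteq> path_arcs (v # vs)" using ch unfolding chain_def by auto
    have finA2: "finite A2" using A2sub finite_subset finite_path_arcs by blast
    have E': "chain_arcs vs (A2 - {e}) G \<subseteq> E"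
      using Cons.prems(2) pa unfolding chain_arcs_def by auto
    have eE: "(v, u) \<in> E" using Cons.prems(2) pa unfolding chain_arcs_def e_def by auto
    have VV': "V' \<subseteq> V" unfolding V_def V'_def by auto
    have vV': "v \<notin> V'" unfolding V'_def using vn vf by auto
    have hd': "hd (v # vs) = v" and last': "last (v # vs) = last vs" using False by auto
    have hdvs: "hd vs = u" unfolding u_def ..
    show ?thesis
    proof (cases "e \<in> A2 \<and> r = 0 \<and> 2 \<le> a")
      case True
      then have eA: "e \<in> A2" and r0: "r = 0" and a2: "2 \<le> a" by auto
      have cardA: "card (A2 - {e}) = card A2 - 1" using eA finA2 by simp
      have "(a - 1 - 1) * (b + 1) + b \<le> card (A2 - {e})"
      proof -
        obtain a0 where "a = Suc (Suc a0)" using a2 by (metis add_2_eq_Suc le_Suc_ex)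
        then show ?thesis using Cons.prems(5) cardA r0 by simp
      qed
      moreover have "1 \<le> a - 1" using a2 by simp
      ultimately have "\<exists>N w x. walk E V' b (a - 1) b (hd vs) (last vs) N w x"
        using Cons.IH[OF ch' E', of "a - 1" b] unfolding V'_def by blast
      then obtain N' w' x' where W': "walk E V' b (a - 1) b u (last vs) N' w' x'"
        using hdvs by blast
      have gad: "gadget_I b (fst (G e)) (snd (G e)) v u \<or>
         gadget_II_basic b (fst (G e)) (snd (G e)) v u \<or>
         gadget_III b (fst (G e)) (snd (G e)) v u"
        using ch eA unfolding chain_def e_def by auto
      have "detour b (fst (G e)) (snd (G e)) v u"
        using gad
      proof (elim disjE)
        assume "gadget_I b (fst (G e)) (snd (G e)) v u"
        then show ?thesis by (rule detour_I[OF b])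
      next
        assume "gadget_II_basic b (fst (G e)) (snd (G e)) v u"
        then show ?thesis by (rule detour_II[OF b])
      next
        assume "gadget_III b (fst (G e)) (snd (G e)) v u"
        then show ?thesis by (rule detour_III[OF b])
      qed
      then obtain L \<alpha> \<beta> d where D: "\<alpha> + b \<le> \<beta>" "\<beta> \<le> L" "d 0 = v" "d L = u"
        "inj_on d {..L}" "d ` {..L} \<subseteq> fst (G e)"
        "\<forall>j<\<alpha>. (d j, d (Suc j)) \<in> snd (G e)"
        "\<forall>j. \<alpha> \<le> j \<longrightarrow> j < \<beta> \<longrightarrow> (d (Suc j), d j) \<in> snd (G e)"
        "\<forall>j. \<beta> \<le> j \<longrightarrow> j < L \<longrightarrow> (d j, d (Suc j)) \<in> snd (G e)"
        unfolding detour_def by blast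
      have GE: "snd (G e) \<subseteq> E" using Cons.prems(2) eA unfolding chain_arcs_def by auto
      have VeV: "fst (G e) \<subseteq> V" unfolding V_def using eA by auto
      have Ve_V': "fst (G e) \<inter> V' \<subseteq> {u}"
      proof
        fix y assume y: "y \<in> fst (G e) \<inter> V'"
        have vi: "fst (G e) \<inter> set (v # vs) = {v, u}" using ch eA unfolding chain_def e_def by auto
        show "y \<in> {u}"
        proof (cases "y \<in> set vs")
          case True
          then show ?thesis using vi y vn by auto
        next
          case False
          then obtain f where f: "f \<in> A2 - {e}" "y \<in> fst (G f)" using y unfolding V'_def by auto
          have pw: "\<forall>e\<in>A2. \<forall>f\<in>A2. e \<noteq> f \<longrightarrow> fst (G e) \<inter> fst (G f) \<subseteq> set (v # vs)"
            using ch unfolding chain_def by simp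
          have "f \<in> A2" "e \<noteq> f" using f by auto
          then have "fst (G e) \<inter> fst (G f) \<subseteq> set (v # vs)" using pw eA by blast
          then have "y \<in> set (v # vs)" using y f(2) by blast
          then show ?thesis using vi y f vf[OF f(1)] by auto
        qed
      qed
      have W'd: "inj_on w' {..N'}" "w' ` {..N'} \<subseteq> V'" "w' 0 = u" "w' N' = last vs"
        "x' 0 = 0" "x' (2*(a-1)-1) = N'" "b \<le> x' 1"
        "\<And>k. 1 \<le> k \<Longrightarrow> k < 2*(a-1)-1 \<Longrightarrow> x' k + b \<le> x' (Suc k)"
        "\<And>k j. k < 2*(a-1)-1 \<Longrightarrow> x' k \<le> j \<Longrightarrow> j < x' (Suc k) \<Longrightarrow>
          (if even k then (w' j, w' (Suc j)) \<in> E else (w' (Suc j), w' j) \<in> E)"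
        using W' unfolding walk_def by auto
      define w where "w j = (if j < L then d j else w' (j - L))" for j
      define x where "x k = (if k = 0 then 0 else if k = 1 then \<alpha> else if k = 2 then \<beta> else x' (k - 2) + L)" for k
      have Lpos: "0 < L" using D(1,2) b by simp
      have wd: "w j = d j" if "j \<le> L" for j
        using that D(4) W'd(3) unfolding w_def by auto
      have wr: "w j = w' (j - L)" if "L \<le> j" for j
        using that D(4) W'd(3) unfolding w_def by auto
      have "walk E V b a r v (last vs) (L + N') w x"
        unfolding walk_def
      proof (intro conjI allI impI)
        show "inj_on w {..L + N'}"
        proof (rule inj_onI)
          fix i j assume i: "i \<in> {..L + N'}" and j: "j \<in> {..L + N'}" and eq: "w i = w j"
          have cross: False if "i' < L" "L \<le> j'" "j' \<le> L + N'" "w i' = w j'" for i' j'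
          proof -
            have "w i' = d i'" using wd that by simp
            moreover have "w j' = w' (j' - L)" using wr that by simp
            moreover have "d i' \<in> fst (G e)" using D(6) that by auto
            moreover have "w' (j' - L) \<in> V'" using W'd(2) that by auto
            ultimately have "d i' = u" using Ve_V' that by auto
            then have "i' = L" using D(4,5) that by (auto dest: inj_onD)
            then show False using that by simp
          qed
          show "i = j"
          proof (cases "i < L"; cases "j < L")
            assume "i < L" "j < L"
            then show ?thesis using eq wd D(5) by (auto dest: inj_onD)
          next
            assume "i < L" "\<not> j < L" then show ?thesis using cross[of i j] eq j by auto
          next
            assume "\<not> i < L" "j < L" then show ?thesis using cross[of j i] eq i by auto
          next
            assume "\<not> i < L" "\<not> j < L"
            then have "w' (i - L) = w' (j - L)" using eq wr by simp
            then have "i - L = j - L" using W'd(1) i j by (auto dest: inj_onD)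
            then show ?thesis using \<open>\<not> i < L\<close> \<open>\<not> j < L\<close> by simp
          qed
        qed
        show "w ` {..L + N'} \<subseteq> V"
        proof
          fix y assume "y \<in> w ` {..L + N'}"
          then obtain j where j: "j \<le> L + N'" "y = w j" by auto
          show "y \<in> V"
          proof (cases "j < L")
            case True
            then have "d j \<in> fst (G e)" using D(6) by auto
            then show ?thesis using j wd VeV True by auto
          next
            case False
            then have "w' (j - L) \<in> V'" using W'd(2) j by auto
            then show ?thesis using j wr VV' False by auto
          qed
        qed
        show "w 0 = v" using wd D(3) by simp
        show "w (L + N') = last vs" using wr W'd(4) by simp
        show "x 0 = 0" unfolding x_def by simp
        show "x (2 * a - 1) = L + N'"
        proof -
          have "2 * a - 1 \<noteq> 0" "2 * a - 1 \<noteq> 1" "2 * a - 1 \<noteq> 2" "2 * a - 1 - 2 = 2 * (a - 1) - 1"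
            using a2 by auto
          then show ?thesis unfolding x_def using W'd(6) by simp
        qed
        show "r \<le> x 1" using r0 by simp
        fix k
        show "1 \<le> k \<Longrightarrow> k < 2 * a - 1 \<Longrightarrow> x k + b \<le> x (Suc k)"
        proof -
          assume k: "1 \<le> k" "k < 2 * a - 1"
          consider "k = 1" | "k = 2" | "3 \<le> k" using k by linarith
          then show ?thesis
          proof cases
            case 1 then show ?thesis unfolding x_def using D(1) by simp
          next
            case 2 then show ?thesis unfolding x_def using D(2) W'd(7) by simp
          next
            case 3
            then have "1 \<le> k - 2" "k - 2 < 2 * (a - 1) - 1" "Suc (k - 2) = Suc k - 2" using k by auto
            then show ?thesis unfolding x_def using W'd(8)[of "k - 2"] 3 by simp
          qed
        qed
        assume k: "k < 2 * a - 1"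
        fix j
        assume j1: "x k \<le> j" and j2: "j < x (Suc k)"
        show "if even k then (w j, w (Suc j)) \<in> E else (w (Suc j), w j) \<in> E"
        proof -
          consider "k = 0" | "k = 1" | "k = 2" | "3 \<le> k" by linarith
          then show ?thesis
          proof cases
            case 1
            then have "j < \<alpha>" using j2 unfolding x_def by simp
            then have "(d j, d (Suc j)) \<in> E" using D(7) GE by auto
            moreover have "Suc j \<le> L" using \<open>j < \<alpha>\<close> D(1,2) by simp
            ultimately show ?thesis using wd 1 by simp
          next
            case 2
            then have "\<alpha> \<le> j" "j < \<beta>" using j1 j2 unfolding x_def by simp_all
            then have "(d (Suc j), d j) \<in> E" using D(8) GE by auto
            moreover have "Suc j \<le> L" using \<open>j < \<beta>\<close> D(2) by simp
            ultimately show ?thesis using wd 2 by simp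
          next
            case 3
            then have jb: "\<beta> \<le> j" "j < x' 1 + L" using j1 j2 unfolding x_def by simp_all
            show ?thesis
            proof (cases "j < L")
              case True
              then have "(d j, d (Suc j)) \<in> E" using D(9) GE jb by auto
              then show ?thesis using wd True 3 by simp
            next
              case False
              have "0 < 2 * (a - 1) - 1" using a2 by simp
              then have "(w' (j - L), w' (Suc (j - L))) \<in> E"
                using W'd(9)[of 0 "j - L"] W'd(5) jb False by simp
              moreover have "Suc (j - L) = Suc j - L" using False by simp
              ultimately show ?thesis using wr False 3 by simp
            qed
          next
            case 4
            then have jj: "x' (k - 2) + L \<le> j" "j < x' (Suc (k - 2)) + L"
            proof -
              have "Suc (k - 2) = k - Suc 0" using 4 by simp
              then show "x' (k - 2) + L \<le> j" "j < x' (Suc (k - 2)) + L"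
                using j1 j2 4 unfolding x_def by simp_all
            qed
            have kk: "k - 2 < 2 * (a - 1) - 1" using k 4 by simp
            have par: "even (k - 2) = even k" using 4 by simp
            have jl: "x' (k - 2) \<le> j - L" "j - L < x' (Suc (k - 2))" using jj by arith+
            have ws: "w (Suc j) = w' (Suc (j - L))" "w j = w' (j - L)" using jj wr
              by (simp_all add: Suc_diff_le)
            show ?thesis using W'd(9)[OF kk jl] par unfolding ws by simp
          qed
        qed
      qed
      then show ?thesis unfolding V_def hd' last' by blast
    next
      case False
      define r' where "r' = (if e \<in> A2 \<and> 0 < r then r - 1 else r)"
      have "(a - 1) * (b + 1) + r' \<le> card (A2 - {e})"
      proof (cases "e \<in> A2")
        case True
        then have cardA: "card (A2 - {e}) = card A2 - 1" using finA2 by simp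
        show ?thesis
        proof (cases "0 < r")
          case True then show ?thesis using cardA Cons.prems(5) \<open>e \<in> A2\<close> unfolding r'_def by simp
        next
          case False
          then have "a = 1" "r = 0" using \<open>\<not> (e \<in> A2 \<and> r = 0 \<and> 2 \<le> a)\<close> \<open>e \<in> A2\<close> Cons.prems(3) by auto
          then show ?thesis unfolding r'_def by simp
        qed
      next
        case False
        then show ?thesis using Cons.prems(5) unfolding r'_def by simp
      qed
      moreover have "r' \<le> b" using Cons.prems(4) unfolding r'_def by auto
      ultimately have "\<exists>N w x. walk E V' b a r' (hd vs) (last vs) N w x"
        using Cons.IH[OF ch' E', of a r'] Cons.prems(3) unfolding V'_def by blast
      then obtain N' w' x' where W': "walk E V' b a r' u (last vs) N' w' x'"
        using hdvs by blast
      have W'd: "inj_on w' {..N'}" "w' ` {..N'} \<subseteq> V'" "w' 0 = u" "w' N' = last vs"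
        "x' 0 = 0" "x' (2*a-1) = N'" "r' \<le> x' 1"
        "\<And>k. 1 \<le> k \<Longrightarrow> k < 2*a-1 \<Longrightarrow> x' k + b \<le> x' (Suc k)"
        "\<And>k j. k < 2*a-1 \<Longrightarrow> x' k \<le> j \<Longrightarrow> j < x' (Suc k) \<Longrightarrow>
          (if even k then (w' j, w' (Suc j)) \<in> E else (w' (Suc j), w' j) \<in> E)"
        using W' unfolding walk_def by auto
      define w where "w j = (if j = 0 then v else w' (j - 1))" for j
      define x where "x k = (if k = 0 then 0 else Suc (x' k))" for k
      have "walk E V b a r v (last vs) (Suc N') w x"
        unfolding walk_def
      proof (intro conjI allI impI)
        show "inj_on w {..Suc N'}"
        proof (rule inj_onI)
          fix i j assume i: "i \<in> {..Suc N'}" and j: "j \<in> {..Suc N'}" and eq: "w i = w j"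
          have nz: "w i' \<noteq> v" if "0 < i'" "i' \<le> Suc N'" for i'
          proof -
            have "w' (i' - 1) \<in> V'" using W'd(2) that by auto
            then show ?thesis unfolding w_def using that vV' by auto
          qed
          show "i = j"
          proof (cases "i = 0"; cases "j = 0")
            assume "i \<noteq> 0" "j \<noteq> 0"
            then have "w' (i - 1) = w' (j - 1)" using eq unfolding w_def by simp
            then have "i - 1 = j - 1" using W'd(1) i j by (auto dest: inj_onD)
            then show ?thesis using \<open>i \<noteq> 0\<close> \<open>j \<noteq> 0\<close> by simp
          qed (use nz eq i j w_def in auto)
        qed
        show "w ` {..Suc N'} \<subseteq> V"
        proof
          fix y assume "y \<in> w ` {..Suc N'}"
          then obtain j where j: "j \<le> Suc N'" "y = w j" by auto
          show "y \<in> V"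
          proof (cases "j = 0")
            case True then show ?thesis using j unfolding w_def V_def by simp
          next
            case False
            then have "w' (j - 1) \<in> V'" using W'd(2) j by auto
            then show ?thesis using j VV' False unfolding w_def by auto
          qed
        qed
        show "w 0 = v" unfolding w_def by simp
        show "w (Suc N') = last vs" unfolding w_def using W'd(4) by simp
        show "x 0 = 0" unfolding x_def by simp
        show "x (2 * a - 1) = Suc N'" unfolding x_def using W'd(6) Cons.prems(3) by simp
        show "r \<le> x 1" unfolding x_def using W'd(7) unfolding r'_def by (auto split: if_splits)
        fix k
        show "1 \<le> k \<Longrightarrow> k < 2 * a - 1 \<Longrightarrow> x k + b \<le> x (Suc k)"
          unfolding x_def using W'd(8) by simp
        assume k: "k < 2 * a - 1"
        fix j
        assume j1: "x k \<le> j" and j2: "j < x (Suc k)"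
        show "if even k then (w j, w (Suc j)) \<in> E else (w (Suc j), w j) \<in> E"
        proof (cases "j = 0")
          case True
          then have "k = 0" using j1 unfolding x_def by (auto split: if_splits)
          then show ?thesis using True eE W'd(3) unfolding w_def by simp
        next
          case False
          then have "x' k \<le> j - 1" using j1 W'd(5) unfolding x_def by (auto split: if_splits)
          moreover have "j - 1 < x' (Suc k)" using j2 False unfolding x_def by simp
          ultimately have "if even k then (w' (j - 1), w' (Suc (j - 1))) \<in> E else (w' (Suc (j - 1)), w' (j - 1)) \<in> E"
            using W'd(9)[OF k] by blast
          moreover obtain j0 where j0: "j = Suc j0" using False by (cases j) auto
          ultimately have "if even k then (w' j0, w' (Suc j0)) \<in> E else (w' (Suc j0), w' j0) \<in> E"
            by (cases "even k") simp_all
          then show ?thesis unfolding w_def j0 by simp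
        qed
      qed
      then show ?thesis unfolding V_def hd' last' by blast
    qed
  qed
qed


theorem lemma2p7:
  fixes a b :: nat
    and vs :: "'a list"
    and A1 A2 :: "('a \<times> 'a) set"
    and G :: "'a \<times> 'a \<Rightarrow> 'a set \<times> ('a \<times> 'a) set"
  assumes "1 \<le> a" and "1 \<le> b"
    and "chain b vs A1 A2 G"
    and "card A2 \<ge> a * (b + 1) - 1"
  shows "\<exists>s t Q Q'. strong_alt_path (chain_arcs vs A2 G) a b s t Q Q'
                     \<and> s 1 = hd vs \<and> t a = last vs"
proof -
  have c: "(a - 1) * (b + 1) + b \<le> card A2"
  proof -
    obtain a0 where "a = Suc a0" using assms(1) by (cases a) auto
    then show ?thesis using assms(4) by simp
  qed
  obtain N w x where "walk (chain_arcs vs A2 G) (set vs \<union> (\<Union>e\<in>A2. fst (G e))) b a b (hd vs) (last vs) N w x"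
    using main_walk[OF assms(2) assms(3) order_refl assms(1) order_refl c] by blast
  then show ?thesis by (rule walk_to_alt[OF _ assms(2) assms(1)])
qed

end
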